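(* Let $\mathcal{M}$ and $\mathcal{M}'$ be ergodic Markov chains on the same finite state space $\Omega$, and let $f$ be an $(\mathcal{M},\mathcal{M}')$-flow such that $\kappa(f)<\infty$. Then there is an $(\mathcal{M},\mathcal{M}')$-flow $f'$ with $A(f')\le 8\,\kappa(f)\,B(f)$.
   Context: A (discrete-time) Markov chain on a finite state space $\Omega$ with transition matrix $P$ is ergodic if irreducible and aperiodic; it then has a unique stationary distribution $\pi>0$. Let $\mathcal{M}$ have transition matrix $P$ and stationary distribution $\pi$, and $\mathcal{M}'$ have transition matrix $P'$ and stationary distribution $\pi'$. Let $E^*(\mathcal{M})=\{(x,y): P(x,y)>0\}$ (pairs not necessarily distinct), similarly $E^*(\mathcal{M}')$. For $(x,y)\in E^*(\mathcal{M}')$, $\mathcal{P}_{x,y}$ is the set of paths $\gamma=(x=x_0,\dots,x_k=y)$ with each $(x_i,x_{i+1})\in E^*(\mathcal{M})$ and each $(z,w)\in E^*(\mathcal{M})$ appearing at most twice as a consecutive pair on $\gamma$; $|\gamma|=k$. $\mathcal{P}=\bigcup_{(x,y)\in E^*(\mathcal{M}')}\mathcal{P}_{x,y}$. An $(\mathcal{M},\mathcal{M}')$-flow is $f:\mathcal{P}\to[0,1]$ with $\sum_{\gamma\in\mathcal{P}_{x,y}}f(\gamma)=\pi'(x)P'(x,y)$ for all $(x,y)\in E^*(\mathcal{M}')$. With $r((z,w),\gamma)$ the number of times $(z,w)$ appears on $\gamma$, the edge congestion is $A_{z,w}(f)=\frac{1}{\pi(z)P(z,w)}\sum_{\gamma:(z,w)\in\gamma}r((z,w),\gamma)|\gamma|f(\gamma)$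 and $A(f)=\max_{(z,w)\in E^*(\mathcal{M})}A_{z,w}(f)$. The state congestion of $z\in\Omega$ is $B_z(f)=\frac{1}{\pi(z)}\sum_{\gamma\in\mathcal{P}: z\in\gamma}|\gamma|f(\gamma)$ (sum over paths visiting $z$), and $B(f)=\max_{z}B_z(f)$. The time-reversal has transition matrix $R(P)(w,x)=\pi(x)P(x,w)/\pi(w)$. Define $\kappa(f)=\max_{(z,w):A_{z,w}(f)>0}\left(\sum_{x\in\Omega}\min\{P(z,x),R(P)(w,x)\}\right)^{-1}$ (with $1/0=\infty$). *)

theory Defs
  imports "HOL-Analysis.Analysis" "HOL-Library.Extended_Real"
begin

fun mpow :: "('a::finite \<Rightarrow> 'a \<Rightarrow> real) \<Rightarrow> nat \<Rightarrow> 'a \<Rightarrow> 'a \<Rightarrow> real" where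
  "mpow P 0 = (\<lambda>x y. if x = y then 1 else 0)"
| "mpow P (Suc n) = (\<lambda>x y. \<Sum>z\<in>UNIV. mpow P n x z * P z y)"

definition stochastic :: "('a::finite \<Rightarrow> 'a \<Rightarrow> real) \<Rightarrow> bool" where
  "stochastic P \<longleftrightarrow> (\<forall>x y. 0 \<le> P x y) \<and> (\<forall>x. (\<Sum>y\<in>UNIV. P x y) = 1)"

definition irreducible_chain :: "('a::finite \<Rightarrow> 'a \<Rightarrow> real) \<Rightarrow> bool" where
  "irreducible_chain P \<longleftrightarrow> (\<forall>x y. \<exists>n. mpow P n x y > 0)"

definition aperiodic_chain :: "('a::finite \<Rightarrow> 'a \<Rightarrow> real) \<Rightarrow> bool" where
  "aperiodic_chain P \<longleftrightarrow> (\<forall>x. Gcd {n::nat. n \<ge> 1 \<and> mpow P n x x > 0} = 1)"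

definition ergodic :: "('a::finite \<Rightarrow> 'a \<Rightarrow> real) \<Rightarrow> bool" where
  "ergodic P \<longleftrightarrow> stochastic P \<and> irreducible_chain P \<and> aperiodic_chain P"

definition stationary :: "('a::finite \<Rightarrow> 'a \<Rightarrow> real) \<Rightarrow> ('a \<Rightarrow> real) \<Rightarrow> bool" where
  "stationary P mu \<longleftrightarrow> (\<forall>x. 0 \<le> mu x) \<and> (\<Sum>x\<in>UNIV. mu x) = 1
     \<and> (\<forall>y. (\<Sum>x\<in>UNIV. mu x * P x y) = mu y)"

definition edges :: "'a list \<Rightarrow> ('a \<times> 'a) list" where
  "edges g = zip g (tl g)"

definition plen :: "'a list \<Rightarrow> nat" where
  "plen g = length g - 1"

definition paths :: "('a::finite \<Rightarrow> 'a \<Rightarrow> real) \<Rightarrow> 'a \<Rightarrow> 'a \<Rightarrow> 'a list set" where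
  "paths P x y = {g. g \<noteq> [] \<and> hd g = x \<and> last g = y
      \<and> (\<forall>e\<in>set (edges g). P (fst e) (snd e) > 0)
      \<and> (\<forall>e. count_list (edges g) e \<le> 2)}"

definition allpaths :: "('a::finite \<Rightarrow> 'a \<Rightarrow> real) \<Rightarrow> ('a \<Rightarrow> 'a \<Rightarrow> real) \<Rightarrow> 'a list set" where
  "allpaths P P' = (\<Union>(x,y)\<in>{(x,y). P' x y > 0}. paths P x y)"

definition is_flow :: "('a::finite \<Rightarrow> 'a \<Rightarrow> real) \<Rightarrow> ('a \<Rightarrow> 'a \<Rightarrow> real) \<Rightarrow> ('a \<Rightarrow> real)
    \<Rightarrow> ('a list \<Rightarrow> real) \<Rightarrow> bool" where
  "is_flow P P' mu' f \<longleftrightarrow> (\<forall>g\<in>allpaths P P'. 0 \<le> f g \<and> f g \<le> 1)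
     \<and> (\<forall>x y. P' x y > 0 \<longrightarrow> (\<Sum>g\<in>paths P x y. f g) = mu' x * P' x y)"

definition congA_edge :: "('a::finite \<Rightarrow> 'a \<Rightarrow> real) \<Rightarrow> ('a \<Rightarrow> real) \<Rightarrow> ('a \<Rightarrow> 'a \<Rightarrow> real)
    \<Rightarrow> ('a list \<Rightarrow> real) \<Rightarrow> 'a \<Rightarrow> 'a \<Rightarrow> real" where
  "congA_edge P mu P' f z w = (1 / (mu z * P z w)) *
     (\<Sum>g\<in>{g\<in>allpaths P P'. (z,w) \<in> set (edges g)}.
        real (count_list (edges g) (z,w)) * real (plen g) * f g)"

definition congA :: "('a::finite \<Rightarrow> 'a \<Rightarrow> real) \<Rightarrow> ('a \<Rightarrow> real) \<Rightarrow> ('a \<Rightarrow> 'a \<Rightarrow> real)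
    \<Rightarrow> ('a list \<Rightarrow> real) \<Rightarrow> real" where
  "congA P mu P' f = Max ((\<lambda>(z,w). congA_edge P mu P' f z w) ` {(z,w). P z w > 0})"

definition congB_state :: "('a::finite \<Rightarrow> 'a \<Rightarrow> real) \<Rightarrow> ('a \<Rightarrow> real) \<Rightarrow> ('a \<Rightarrow> 'a \<Rightarrow> real)
    \<Rightarrow> ('a list \<Rightarrow> real) \<Rightarrow> 'a \<Rightarrow> real" where
  "congB_state P mu P' f z = (1 / mu z) *
     (\<Sum>g\<in>{g\<in>allpaths P P'. z \<in> set g}. real (plen g) * f g)"

definition congB :: "('a::finite \<Rightarrow> 'a \<Rightarrow> real) \<Rightarrow> ('a \<Rightarrow> real) \<Rightarrow> ('a \<Rightarrow> 'a \<Rightarrow> real)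
    \<Rightarrow> ('a list \<Rightarrow> real) \<Rightarrow> real" where
  "congB P mu P' f = Max (range (congB_state P mu P' f))"

definition reversal :: "('a::finite \<Rightarrow> 'a \<Rightarrow> real) \<Rightarrow> ('a \<Rightarrow> real) \<Rightarrow> 'a \<Rightarrow> 'a \<Rightarrow> real" where
  "reversal P mu w x = mu x * P x w / mu w"

definition einv :: "real \<Rightarrow> ereal" where
  "einv s = (if s = 0 then \<infinity> else ereal (1 / s))"

text \<open>kappa(f); the maximum over an empty index set is taken to be 0.\<close>
definition kappa :: "('a::finite \<Rightarrow> 'a \<Rightarrow> real) \<Rightarrow> ('a \<Rightarrow> real) \<Rightarrow> ('a \<Rightarrow> 'a \<Rightarrow> real)
    \<Rightarrow> ('a list \<Rightarrow> real) \<Rightarrow> ereal" where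
  "kappa P mu P' f = Sup ({0} \<union>
     {einv (\<Sum>x\<in>UNIV. min (P z x) (reversal P mu w x)) | z w.
        P z w > 0 \<and> congA_edge P mu P' f z w > 0})"

end

theory Submission
  imports Defs
begin

lemma edges_Nil[simp]: "edges [] = []" by (simp add: edges_def)
lemma edges_single[simp]: "edges [x] = []" by (simp add: edges_def)
lemma edges_Cons2[simp]: "edges (x # y # zs) = (x, y) # edges (y # zs)" by (simp add: edges_def)

lemma edges_snoc: "xs \<noteq> [] \<Longrightarrow> edges (xs @ [y]) = edges xs @ [(last xs, y)]"
proof (induction xs)
  case Nil then show ?case by simp
next
  case (Cons x xs)
  then show ?case by (cases xs) auto
qed

lemma edges_prefix: "set (edges (xs @ [y])) \<subseteq> set (edges (xs @ y # ys))"
proof (induction xs)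
  case Nil then show ?case by simp
next
  case (Cons x xs)
  then show ?case by (cases xs) auto
qed

definition lestep :: "'a list \<Rightarrow> 'a \<Rightarrow> 'a list" where
  "lestep p y = (if y \<in> set p then takeWhile (\<lambda>z. z \<noteq> y) p @ [y] else p @ [y])"

definition lerase :: "'a list \<Rightarrow> 'a list" where
  "lerase g = foldl lestep [] g"

lemma lerase_Nil[simp]: "lerase [] = []" by (simp add: lerase_def)
lemma lerase_single[simp]: "lerase [y] = [y]" by (simp add: lerase_def lestep_def)
lemma lerase_snoc: "lerase (g @ [y]) = lestep (lerase g) y" by (simp add: lerase_def)

lemma lerase_props:
  "g \<noteq> [] \<Longrightarrow> lerase g \<noteq> [] \<and> hd (lerase g) = hd g \<and> last (lerase g) = last g
     \<and> distinct (lerase g) \<and> set (lerase g) \<subseteq> set g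
     \<and> set (edges (lerase g)) \<subseteq> set (edges g) \<and> length (lerase g) \<le> length g"
proof (induction g rule: rev_induct)
  case Nil then show ?case by simp
next
  case (snoc y g0)
  show ?case
  proof (cases "g0 = []")
    case True
    then show ?thesis by simp
  next
    case False
    define p where "p = lerase g0"
    have IH: "p \<noteq> [] \<and> hd p = hd g0 \<and> last p = last g0 \<and> distinct p \<and> set p \<subseteq> set g0
       \<and> set (edges p) \<subseteq> set (edges g0) \<and> length p \<le> length g0"
      using snoc.IH False unfolding p_def by blast
    have e0: "set (edges g0) \<subseteq> set (edges (g0 @ [y]))" using edges_snoc[OF False] by auto
    show ?thesis
    proof (cases "y \<in> set p")
      case True
      then obtain as bs where pe: "p = as @ y # bs" and ya: "y \<notin> set as"
        by (meson split_list_first)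
      have "takeWhile (\<lambda>z. z \<noteq> y) (as @ y # bs) = as"
        using ya by (induction as) auto
      then have tw: "takeWhile (\<lambda>z. z \<noteq> y) p = as" using pe by simp
      have L: "lerase (g0 @ [y]) = as @ [y]"
        by (simp add: lerase_snoc lestep_def True tw flip: p_def)
      have "hd (as @ [y]) = hd p" using pe by (cases as) auto
      moreover have "distinct (as @ [y])" using IH pe by auto
      moreover have "set (as @ [y]) \<subseteq> set (g0 @ [y])" using IH pe by auto
      moreover have "set (edges (as @ [y])) \<subseteq> set (edges (g0 @ [y]))"
        using edges_prefix[of as y bs] IH pe e0 by auto
      moreover have "length (as @ [y]) \<le> length (g0 @ [y])" using IH pe by auto
      ultimately show ?thesis using L IH False by simp
    next
      case nt: False
      have L: "lerase (g0 @ [y]) = p @ [y]"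
        by (simp add: lerase_snoc lestep_def nt flip: p_def)
      have "set (edges (p @ [y])) \<subseteq> set (edges (g0 @ [y]))"
        using edges_snoc[of p y] edges_snoc[OF False, of y] IH by auto
      then show ?thesis using L IH False nt by auto
    qed
  qed
qed

fun W :: "('a \<Rightarrow> 'a \<Rightarrow> 'a \<Rightarrow> real) \<Rightarrow> 'a list \<Rightarrow> 'a list \<Rightarrow> real" where
  "W q [] t = 0"
| "W q [v] t = (if t = [v] then 1 else 0)"
| "W q (v # w # rest) t = (case t of v' # x # t' \<Rightarrow> if v' = v then q v w x * W q (w # rest) t' else 0 | _ \<Rightarrow> 0)"

lemma W_Cons2: "W q (v # w # rest) (v' # x # t') = (if v' = v then q v w x * W q (w # rest) t' else 0)"
  by simp

lemma W_nonneg: "(\<And>v w x. 0 \<le> q v w x) \<Longrightarrow> 0 \<le> W q h t"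
  by (induction q h t rule: W.induct) (auto split: list.split)

lemma W_supp: "W q h t \<noteq> 0 \<Longrightarrow> t \<noteq> [] \<and> hd t = hd h \<and> last t = last h \<and> length t = 2 * length h - 1"
proof (induction q h t rule: W.induct)
  case (1 q t) then show ?case by simp
next
  case (2 q v t) then show ?case by (simp split: if_splits)
next
  case (3 q v w rest t)
  then obtain v' x t' where t: "t = v' # x # t'" by (auto split: list.splits)
  then have "W q (w # rest) t' \<noteq> 0" "v' = v" using 3(2) by (auto split: if_splits)
  then show ?case using 3(1)[of v' "x # t'" x t'] t by auto
qed

lemma W_edges: "W q h t \<noteq> 0 \<Longrightarrow> e \<in> set (edges t) \<Longrightarrow>
   \<exists>v w. (v, w) \<in> set (edges h) \<and> ((fst e = v \<and> q v w (snd e) \<noteq> 0) \<or> (snd e = w \<and> q v w (fst e) \<noteq> 0))"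
proof (induction q h t rule: W.induct)
  case (1 q t) then show ?case by simp
next
  case (2 q v t) then show ?case by (simp split: if_splits)
next
  case (3 q v w rest t)
  then obtain v' x t' where t: "t = v' # x # t'" by (auto split: list.splits)
  then have W': "W q (w # rest) t' \<noteq> 0" and vv: "v' = v" and qn: "q v w x \<noteq> 0"
    using 3(2) by (auto split: if_splits)
  obtain t'' where t'': "t' = w # t''" using W_supp[OF W'] by (cases t') auto
  have "e = (v, x) \<or> e = (x, w) \<or> e \<in> set (edges t')" using 3(3) t t'' vv by auto
  then show ?case
  proof (elim disjE)
    assume "e \<in> set (edges t')"
    then obtain a b where "(a, b) \<in> set (edges (w # rest))"
      "(fst e = a \<and> q a b (snd e) \<noteq> 0) \<or> (snd e = b \<and> q a b (fst e) \<noteq> 0)"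
      using 3(1)[of v "x # t'" x t'] t vv W' by blast
    then show ?thesis by (cases rest) auto
  qed (use qn in auto)
qed

lemma W_count: "W q h t \<noteq> 0 \<Longrightarrow>
   count_list (edges t) e \<le> count_list (butlast h) (fst e) + count_list (tl h) (snd e)"
proof (induction q h t rule: W.induct)
  case (1 q t) then show ?case by simp
next
  case (2 q v t) then show ?case by (simp split: if_splits)
next
  case (3 q v w rest t)
  then obtain v' x t' where t: "t = v' # x # t'" by (auto split: list.splits)
  then have W': "W q (w # rest) t' \<noteq> 0" and vv: "v' = v"
    using 3(2) by (auto split: if_splits)
  obtain t'' where t'': "t' = w # t''" using W_supp[OF W'] by (cases t') auto
  have IH: "count_list (edges t') e \<le> count_list (butlast (w # rest)) (fst e) + count_list rest (snd e)"
    using 3(1)[of v "x # t'" x t'] t vv W' by simp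
  have "count_list (edges t) e = (if (v, x) = e then 1 else 0) + (if (x, w) = e then 1 else 0) + count_list (edges t') e"
    using t t'' vv by simp
  moreover have "count_list (butlast (v # w # rest)) (fst e) = (if v = fst e then 1 else 0) + count_list (butlast (w # rest)) (fst e)"
    by simp
  moreover have "count_list (tl (v # w # rest)) (snd e) = (if w = snd e then 1 else 0) + count_list rest (snd e)"
    by simp
  moreover have "(if (v, x) = e then 1 else 0) \<le> (if v = fst e then 1 else (0::nat))" by auto
  moreover have "(if (x, w) = e then 1 else 0) \<le> (if w = snd e then 1 else (0::nat))" by auto
  ultimately show ?case using IH by linarith
qed

lemma finite_len: "finite {t::'a::finite list. length t = n}"
  using finite_lists_length_eq[of "UNIV::'a set" n] by simp

lemma sum_len_Suc:
  "(\<Sum>t\<in>{t::'a::finite list. length t = Suc n}. g t) = (\<Sum>x\<in>UNIV. \<Sum>t\<in>{t. length t = n}. g (x # t))"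
proof -
  have e: "{t::'a list. length t = Suc n} = case_prod Cons ` (UNIV \<times> {t. length t = n})"
    by (auto simp: length_Suc_conv)
  have i: "inj_on (case_prod Cons) (UNIV \<times> {t::'a list. length t = n})"
    by (auto simp: inj_on_def)
  have "(\<Sum>t\<in>{t::'a::finite list. length t = Suc n}. g t) = (\<Sum>p\<in>UNIV \<times> {t. length t = n}. g (case_prod Cons p))"
    unfolding e by (subst sum.reindex[OF i]) simp
  also have "\<dots> = (\<Sum>x\<in>UNIV. \<Sum>t\<in>{t. length t = n}. g (x # t))"
    by (simp add: sum.cartesian_product case_prod_unfold)
  finally show ?thesis .
qed

lemma sum_len_Suc2:
  "(\<Sum>t\<in>{t::'a::finite list. length t = Suc (Suc n)}. g t) = (\<Sum>y\<in>UNIV. \<Sum>x\<in>UNIV. \<Sum>t\<in>{t. length t = n}. g (y # x # t))"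
  by (simp add: sum_len_Suc)

lemma sum_if_first:
  "(\<Sum>y\<in>(UNIV::'a::finite set). \<Sum>x\<in>A. \<Sum>t\<in>B. if y = v then F x t else 0) = (\<Sum>x\<in>A. \<Sum>t\<in>B. F x t)"
proof -
  have "\<And>y. (\<Sum>x\<in>A. \<Sum>t\<in>B. if y = v then F x t else 0) = (if y = v then \<Sum>x\<in>A. \<Sum>t\<in>B. F x t else 0)"
    by (cases "y = v") simp_all
  then show ?thesis by (simp add: sum.delta')
qed

lemma W_sum:
  "h \<noteq> [] \<Longrightarrow> (\<forall>e\<in>set (edges h). (\<Sum>x\<in>UNIV. q (fst e) (snd e) x) = 1) \<Longrightarrow>
   (\<Sum>t\<in>{t::'a::finite list. length t = 2 * length h - 1}. W q h t) = 1"
proof (induction h rule: induct_list012)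
  case 1 then show ?case by simp
next
  case (2 v)
  have "(\<Sum>t\<in>{t::'a list. length t = 1}. W q [v] t) = (\<Sum>t\<in>{t::'a list. length t = 1}. if t = [v] then 1 else 0)"
    by simp
  also have "\<dots> = 1" by (subst sum.delta[OF finite_len]) simp
  finally show ?case by simp
next
  case (3 v w rest)
  define n where "n = 2 * length (w # rest) - 1"
  have len: "2 * length (v # w # rest) - 1 = Suc (Suc n)" by (simp add: n_def)
  have IH: "(\<Sum>t\<in>{t. length t = n}. W q (w # rest) t) = 1"
    using 3(2,4) by (simp add: n_def)
  have qs: "(\<Sum>x\<in>UNIV. q v w x) = 1" using 3(4) by simp
  have "(\<Sum>t\<in>{t. length t = 2 * length (v # w # rest) - 1}. W q (v # w # rest) t)
      = (\<Sum>y\<in>UNIV. \<Sum>x\<in>UNIV. \<Sum>t\<in>{t. length t = n}. (if y = v then q v w x * W q (w # rest) t else 0))"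
    unfolding len sum_len_Suc2 W_Cons2 ..
  also have "\<dots> = (\<Sum>x\<in>UNIV. \<Sum>t\<in>{t. length t = n}. q v w x * W q (w # rest) t)"
    by (rule sum_if_first)
  also have "\<dots> = (\<Sum>x\<in>UNIV. q v w x)"
    by (simp add: sum_distrib_left[symmetric] IH)
  finally show ?case using qs by simp
qed

lemma W_exp:
  assumes nn: "\<And>v w x. 0 \<le> q v w x"
  shows "h \<noteq> [] \<Longrightarrow> distinct h \<Longrightarrow>
    (\<forall>e\<in>set (edges h). (\<Sum>x\<in>UNIV. q (fst e) (snd e) x) = 1 \<and>
        (\<forall>x. q (fst e) (snd e) x \<le> \<alpha> (fst e) x \<and> q (fst e) (snd e) x \<le> \<beta> (snd e) x)) \<Longrightarrow>
   (\<Sum>t\<in>{t::'a::finite list. length t = 2 * length h - 1}. W q h t * real (count_list (edges t) (a, b)))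
     \<le> (if a \<in> set (butlast h) then \<alpha> a b else 0) + (if b \<in> set (tl h) then \<beta> b a else 0)"
proof (induction h rule: induct_list012)
  case 1 then show ?case by simp
next
  case (2 v)
  have "(\<Sum>t\<in>{t::'a list. length t = 2 * length [v] - 1}. W q [v] t * real (count_list (edges t) (a, b))) = 0"
    by (rule sum.neutral) auto
  then show ?case by simp
next
  case (3 v w rest)
  define n where "n = 2 * length (w # rest) - 1"
  define c where "c t = real (count_list (edges t) (a, b))" for t
  have len: "2 * length (v # w # rest) - 1 = Suc (Suc n)" by (simp add: n_def)
  have hyp: "\<forall>e\<in>set (edges (w # rest)). (\<Sum>x\<in>UNIV. q (fst e) (snd e) x) = 1 \<and>
        (\<forall>x. q (fst e) (snd e) x \<le> \<alpha> (fst e) x \<and> q (fst e) (snd e) x \<le> \<beta> (snd e) x)"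
    using 3(5) by simp
  have IH: "(\<Sum>t\<in>{t. length t = n}. W q (w # rest) t * c t)
      \<le> (if a \<in> set (butlast (w # rest)) then \<alpha> a b else 0) + (if b \<in> set rest then \<beta> b a else 0)"
    using 3(2) 3(4) hyp by (simp add: n_def c_def)
  have W1: "(\<Sum>t\<in>{t. length t = n}. W q (w # rest) t) = 1"
    unfolding n_def by (rule W_sum) (use hyp in auto)
  have qs: "(\<Sum>x\<in>UNIV. q v w x) = 1" and qa: "\<And>x. q v w x \<le> \<alpha> v x" and qb: "\<And>x. q v w x \<le> \<beta> w x"
    using 3(5) by auto
  define i1 where "i1 x = (if (v, x) = (a, b) then 1 else 0::real)" for x
  define i2 where "i2 x = (if (x, w) = (a, b) then 1 else 0::real)" for x
  have split: "W q (w # rest) t * c (v # x # t) = W q (w # rest) t * (i1 x + i2 x + c t)" for x t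
  proof (cases "W q (w # rest) t = 0")
    case False
    then obtain t'' where "t = w # t''" using W_supp[OF False] by (cases t) auto
    then show ?thesis by (simp add: c_def i1_def i2_def)
  qed simp
  have "(\<Sum>t\<in>{t. length t = 2 * length (v # w # rest) - 1}. W q (v # w # rest) t * c t)
      = (\<Sum>y\<in>UNIV. \<Sum>x\<in>UNIV. \<Sum>t\<in>{t. length t = n}. (if y = v then q v w x * (W q (w # rest) t * c (v # x # t)) else 0))"
    unfolding len sum_len_Suc2 W_Cons2 by (intro sum.cong refl) simp
  also have "\<dots> = (\<Sum>x\<in>UNIV. \<Sum>t\<in>{t. length t = n}. q v w x * (W q (w # rest) t * c (v # x # t)))"
    by (rule sum_if_first)
  also have "\<dots> = (\<Sum>x\<in>UNIV. \<Sum>t\<in>{t. length t = n}. q v w x * (i1 x + i2 x) * W q (w # rest) t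
        + q v w x * (W q (w # rest) t * c t))"
    unfolding split by (simp add: algebra_simps)
  also have "\<dots> = (\<Sum>x\<in>UNIV. q v w x * (i1 x + i2 x)) + (\<Sum>t\<in>{t. length t = n}. W q (w # rest) t * c t)"
    by (simp add: sum.distrib sum_distrib_left[symmetric] W1 sum_distrib_right[symmetric] qs)
  also have "(\<Sum>x\<in>UNIV. q v w x * (i1 x + i2 x)) = (if v = a then q v w b else 0) + (if w = b then q v w a else 0)"
  proof -
    have e1: "\<And>x. q v w x * i1 x = (if v = a then (if x = b then q v w b else 0) else 0)"
      by (simp add: i1_def)
    have e2: "\<And>x. q v w x * i2 x = (if w = b then (if x = a then q v w a else 0) else 0)"
      by (simp add: i2_def)
    have "(\<Sum>x\<in>UNIV. q v w x * (i1 x + i2 x)) = (\<Sum>x\<in>UNIV. q v w x * i1 x) + (\<Sum>x\<in>UNIV. q v w x * i2 x)"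
      by (simp add: distrib_left sum.distrib)
    also have "\<dots> = (if v = a then q v w b else 0) + (if w = b then q v w a else 0)"
      unfolding e1 e2 by (simp add: sum.delta)
    finally show ?thesis .
  qed
  finally have eq: "(\<Sum>t\<in>{t. length t = 2 * length (v # w # rest) - 1}. W q (v # w # rest) t * c t)
     = (if v = a then q v w b else 0) + (if w = b then q v w a else 0) + (\<Sum>t\<in>{t. length t = n}. W q (w # rest) t * c t)" .
  have d1: "v \<notin> set (butlast (w # rest))" using 3(4) by (meson distinct.simps(2) in_set_butlastD)
  have d2: "w \<notin> set rest" using 3(4) by simp
  have b1: "(if v = a then q v w b else 0) + (if a \<in> set (butlast (w # rest)) then \<alpha> a b else 0)
      \<le> (if a \<in> set (butlast (v # w # rest)) then \<alpha> a b else 0)"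
    using d1 qa[of b] by auto
  have b2: "(if w = b then q v w a else 0) + (if b \<in> set rest then \<beta> b a else 0)
      \<le> (if b \<in> set (tl (v # w # rest)) then \<beta> b a else 0)"
    using d2 qb[of a] by auto
  show ?case using eq IH b1 b2 unfolding c_def by linarith
qed

lemma mpow_nonneg: "stochastic P \<Longrightarrow> 0 \<le> mpow P n x y"
  by (induction n arbitrary: y) (auto simp: stochastic_def intro!: sum_nonneg)

lemma stat_pow: "stationary P mu \<Longrightarrow> (\<Sum>x\<in>UNIV. mu x * mpow P n x y) = mu y"
proof (induction n arbitrary: y)
  case 0 then show ?case by (simp add: if_distrib sum.delta' cong: if_cong)
next
  case (Suc n)
  have "(\<Sum>x\<in>UNIV. mu x * mpow P (Suc n) x y) = (\<Sum>x\<in>UNIV. \<Sum>z\<in>UNIV. mu x * mpow P n x z * P z y)"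
    by (simp add: sum_distrib_left mult.assoc)
  also have "\<dots> = (\<Sum>z\<in>UNIV. (\<Sum>x\<in>UNIV. mu x * mpow P n x z) * P z y)"
    by (subst sum.swap) (simp add: sum_distrib_right)
  also have "\<dots> = (\<Sum>z\<in>UNIV. mu z * P z y)" using Suc by simp
  also have "\<dots> = mu y" using Suc.prems by (simp add: stationary_def)
  finally show ?case .
qed

lemma mu_pos:
  assumes "ergodic P" "stationary P mu"
  shows "0 < mu y"
proof (rule ccontr)
  assume "\<not> 0 < mu y"
  moreover have "0 \<le> mu y" using assms(2) by (simp add: stationary_def)
  ultimately have m0: "mu y = 0" by linarith
  have st: "stochastic P" using assms(1) by (simp add: ergodic_def)
  have "mu x = 0" for x
  proof -
    obtain n where n: "mpow P n x y > 0" using assms(1) by (auto simp: ergodic_def irreducible_chain_def)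
    have "(\<Sum>x\<in>UNIV. mu x * mpow P n x y) = 0" using stat_pow[OF assms(2)] m0 by simp
    moreover have "\<forall>x\<in>UNIV. 0 \<le> mu x * mpow P n x y"
      using assms(2) mpow_nonneg[OF st] by (simp add: stationary_def)
    ultimately have "mu x * mpow P n x y = 0" by (simp add: sum_nonneg_eq_0_iff)
    then show ?thesis using n by simp
  qed
  then show False using assms(2) by (simp add: stationary_def)
qed

lemma length_edges: "length (edges g) = length g - 1"
  by (simp add: edges_def)

lemma paths_len:
  fixes P :: "'a::finite \<Rightarrow> 'a \<Rightarrow> real" and g :: "'a list"
  assumes "g \<in> paths P x y"
  shows "length g \<le> 2 * CARD('a \<times> 'a) + 1"
proof -
  have "length (edges g) = sum (count_list (edges g)) (UNIV :: ('a \<times> 'a) set)"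
    by (rule sum_count_set[symmetric]) auto
  also have "\<dots> \<le> sum (\<lambda>_. 2) (UNIV :: ('a \<times> 'a) set)"
    using assms by (intro sum_mono) (auto simp: paths_def)
  finally show ?thesis by (simp add: length_edges)
qed

lemma finite_allpaths: "finite (allpaths (P::'a::finite \<Rightarrow> 'a \<Rightarrow> real) P')"
proof -
  have "allpaths P P' \<subseteq> {g. set g \<subseteq> UNIV \<and> length g \<le> 2 * CARD('a \<times> 'a) + 1}"
    using paths_len unfolding allpaths_def by fastforce
  then show ?thesis using finite_lists_length_le[of "UNIV::'a set"] finite_subset by auto
qed

lemma distinct_count_le1: "distinct xs \<Longrightarrow> count_list xs a \<le> 1"
  by (induction xs) auto

lemma sum_supp_eq:
  assumes "finite A" "finite B" "\<And>t. F t \<noteq> 0 \<Longrightarrow> t \<in> A \<and> t \<in> B"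
  shows "sum F A = sum F B"
proof -
  have "sum F A = sum F (A \<inter> B)" using assms by (intro sum.mono_neutral_right) auto
  also have "\<dots> = sum F B" using assms by (intro sum.mono_neutral_left) auto
  finally show ?thesis .
qed

theorem lemma27:
  fixes P P' :: "'a::finite \<Rightarrow> 'a \<Rightarrow> real"
    and mu mu' :: "'a \<Rightarrow> real"
    and f :: "'a list \<Rightarrow> real"
  assumes "ergodic P" and "ergodic P'"
    and "stationary P mu" and "stationary P' mu'"
    and "is_flow P P' mu' f"
    and "kappa P mu P' f < \<infinity>"
  shows "\<exists>f'. is_flow P P' mu' f' \<and>
           ereal (congA P mu P' f') \<le> 8 * kappa P mu P' f * ereal (congB P mu P' f)"
proof -
  define AP where "AP = allpaths P P'"
  define \<kappa> where "\<kappa> = kappa P mu P' f"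
  have finAP: "finite AP" using finite_allpaths AP_def by simp
  have stP: "stochastic P" using assms(1) by (simp add: ergodic_def)
  have stP': "stochastic P'" using assms(2) by (simp add: ergodic_def)
  have Pnn: "\<And>x y. 0 \<le> P x y" using stP by (simp add: stochastic_def)
  have P'nn: "\<And>x y. 0 \<le> P' x y" using stP' by (simp add: stochastic_def)
  have mupos: "\<And>x. 0 < mu x" using mu_pos[OF assms(1,3)] .
  have mu'nn: "\<And>x. 0 \<le> mu' x" using assms(4) by (simp add: stationary_def)
  have mu'1: "mu' x \<le> 1" for x
  proof -
    have "mu' x \<le> sum mu' UNIV" by (rule member_le_sum) (use mu'nn in auto)
    then show ?thesis using assms(4) by (simp add: stationary_def)
  qed
  have P'1: "P' x y \<le> 1" for x y
  proof -
    have "P' x y \<le> sum (P' x) UNIV" by (rule member_le_sum) (use P'nn in auto)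
    then show ?thesis using stP' by (simp add: stochastic_def)
  qed
  have fl: "\<And>\<gamma>. \<gamma> \<in> AP \<Longrightarrow> 0 \<le> f \<gamma> \<and> f \<gamma> \<le> 1"
    using assms(5) by (simp add: is_flow_def AP_def)
  have fsum: "\<And>x y. 0 < P' x y \<Longrightarrow> (\<Sum>\<gamma>\<in>paths P x y. f \<gamma>) = mu' x * P' x y"
    using assms(5) by (simp add: is_flow_def)
  have APpaths: "\<And>\<gamma>. \<gamma> \<in> AP \<Longrightarrow> \<gamma> \<in> paths P (hd \<gamma>) (last \<gamma>) \<and> 0 < P' (hd \<gamma>) (last \<gamma>)"
    unfolding AP_def allpaths_def paths_def by auto
  have pathsAP: "\<And>x y. 0 < P' x y \<Longrightarrow> paths P x y \<subseteq> AP"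
    unfolding AP_def allpaths_def by auto
  have inpaths: "\<And>\<gamma> x y. \<gamma> \<in> AP \<Longrightarrow> (\<gamma> \<in> paths P x y \<longleftrightarrow> hd \<gamma> = x \<and> last \<gamma> = y)"
    using APpaths by (auto simp: paths_def)
  have APne: "\<And>\<gamma>. \<gamma> \<in> AP \<Longrightarrow> \<gamma> \<noteq> []"
    using APpaths by (auto simp: paths_def)

  have k0: "0 \<le> \<kappa>" unfolding \<kappa>_def kappa_def by (rule Sup_upper) simp
  define k where "k = real_of_ereal \<kappa>"
  have kE: "\<kappa> = ereal k" using k0 assms(6) unfolding \<kappa>_def k_def by (cases "kappa P mu P' f") auto
  have k0': "0 \<le> k" using k0 kE by simp
  define s where "s = (\<lambda>z w. \<Sum>x\<in>UNIV. min (P z x) (reversal P mu w x))"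
  define q where "q = (\<lambda>z w x. if s z w = 0 then 0 else min (P z x) (reversal P mu w x) / s z w)"
  have Rnn: "\<And>w x. 0 \<le> reversal P mu w x"
    using mupos Pnn by (simp add: reversal_def less_imp_le)
  have snn: "\<And>z w. 0 \<le> s z w" unfolding s_def using Rnn Pnn by (simp add: sum_nonneg)
  have qnn: "\<And>z w x. 0 \<le> q z w x" unfolding q_def using Rnn Pnn snn by simp
  have kap: "0 < s z w \<and> 1 \<le> k * s z w" if "0 < P z w" "0 < congA_edge P mu P' f z w" for z w
  proof -
    have "einv (s z w) \<le> \<kappa>" unfolding \<kappa>_def kappa_def s_def
      by (rule Sup_upper) (use that in blast)
    then have s0: "s z w \<noteq> 0" and "1 / s z w \<le> k" using kE by (auto simp: einv_def split: if_splits)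
    moreover have "0 < s z w" using s0 snn[of z w] by linarith
    ultimately show ?thesis by (simp add: divide_le_eq mult.commute)
  qed
  have qprops: "(\<Sum>x\<in>UNIV. q z w x) = 1 \<and> (\<forall>x. q z w x \<le> k * P z x \<and> q z w x \<le> k * reversal P mu w x)"
    if "0 < s z w" "1 \<le> k * s z w" for z w
  proof -
    have "(\<Sum>x\<in>UNIV. q z w x) = (\<Sum>x\<in>UNIV. min (P z x) (reversal P mu w x)) / s z w"
      unfolding q_def using that by (simp add: sum_divide_distrib)
    also have "\<dots> = 1" using that unfolding s_def by simp
    finally have 1: "(\<Sum>x\<in>UNIV. q z w x) = 1" .
    have ik: "1 / s z w \<le> k" using that by (simp add: divide_le_eq mult.commute)
    have "q z w x \<le> k * P z x \<and> q z w x \<le> k * reversal P mu w x" for x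
    proof -
      have "q z w x = min (P z x) (reversal P mu w x) * (1 / s z w)" unfolding q_def using that by simp
      moreover have "min (P z x) (reversal P mu w x) * (1 / s z w) \<le> P z x * k"
        using ik Pnn[of z x] Rnn[of w x] that
        by (meson min.cobounded1 min.boundedI mult_mono less_imp_le zero_le_divide_1_iff order_trans)
      moreover have "min (P z x) (reversal P mu w x) * (1 / s z w) \<le> reversal P mu w x * k"
        using ik Pnn[of z x] Rnn[of w x] that
        by (meson min.cobounded2 min.boundedI mult_mono less_imp_le zero_le_divide_1_iff order_trans)
      ultimately show ?thesis by (simp add: mult.commute)
    qed
    then show ?thesis using 1 by blast
  qed
  have Apos: "0 < P v w \<and> 0 < congA_edge P mu P' f v w"
    if g: "\<gamma> \<in> AP" "0 < f \<gamma>" "(v, w) \<in> set (edges \<gamma>)" for \<gamma> v w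
  proof -
    have Pvw: "0 < P v w" using APpaths[OF g(1)] g(3) by (auto simp: paths_def)
    define G where "G = {g \<in> allpaths P P'. (v, w) \<in> set (edges g)}"
    have finG: "finite G" using finAP unfolding G_def AP_def by simp
    have gG: "\<gamma> \<in> G" using g unfolding G_def AP_def by simp
    have cnt: "0 < count_list (edges \<gamma>) (v, w)" using g(3) count_list_0_iff by (metis gr0I)
    have pl: "0 < plen \<gamma>" using g(3) unfolding plen_def
      by (metis length_edges length_pos_if_in_set)
    have "0 < real (count_list (edges \<gamma>) (v, w)) * real (plen \<gamma>) * f \<gamma>"
      using cnt pl g(2) by simp
    also have "\<dots> \<le> (\<Sum>g\<in>G. real (count_list (edges g) (v, w)) * real (plen g) * f g)"
      by (rule member_le_sum[OF gG _ finG]) (use fl in \<open>auto simp: G_def AP_def\<close>)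
    finally have "0 < (\<Sum>g\<in>G. real (count_list (edges g) (v, w)) * real (plen g) * f g)" .
    then show ?thesis using Pvw mupos[of v] unfolding congA_edge_def G_def by simp
  qed
  have lp: "lerase \<gamma> \<noteq> [] \<and> hd (lerase \<gamma>) = hd \<gamma> \<and> last (lerase \<gamma>) = last \<gamma>
     \<and> distinct (lerase \<gamma>) \<and> set (lerase \<gamma>) \<subseteq> set \<gamma>
     \<and> set (edges (lerase \<gamma>)) \<subseteq> set (edges \<gamma>) \<and> length (lerase \<gamma>) \<le> length \<gamma>"
    if "\<gamma> \<in> AP" for \<gamma>
    using lerase_props APne[OF that] by blast
  have good: "\<forall>e\<in>set (edges (lerase \<gamma>)). (\<Sum>x\<in>UNIV. q (fst e) (snd e) x) = 1 \<and>
        (\<forall>x. q (fst e) (snd e) x \<le> k * P (fst e) x \<and> q (fst e) (snd e) x \<le> k * reversal P mu (snd e) x)"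
    if "\<gamma> \<in> AP" "0 < f \<gamma>" for \<gamma>
  proof
    fix e assume "e \<in> set (edges (lerase \<gamma>))"
    then have "e \<in> set (edges \<gamma>)" using lp[OF that(1)] by blast
    then have "0 < P (fst e) (snd e) \<and> 0 < congA_edge P mu P' f (fst e) (snd e)"
      using Apos[OF that] by (cases e) auto
    then show "(\<Sum>x\<in>UNIV. q (fst e) (snd e) x) = 1 \<and>
        (\<forall>x. q (fst e) (snd e) x \<le> k * P (fst e) x \<and> q (fst e) (snd e) x \<le> k * reversal P mu (snd e) x)"
      using kap qprops by blast
  qed
  define L where "L \<gamma> = {t::'a list. length t = 2 * length (lerase (\<gamma>::'a list)) - 1}" for \<gamma>
  have finL: "\<And>\<gamma>. finite (L \<gamma>)" unfolding L_def by (rule finite_len)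
  have Wsum1: "(\<Sum>t\<in>L \<gamma>. W q (lerase \<gamma>) t) = 1" if "\<gamma> \<in> AP" "0 < f \<gamma>" for \<gamma>
    unfolding L_def by (rule W_sum) (use lp[OF that(1)] good[OF that] in auto)
  have supp: "t \<in> paths P (hd \<gamma>) (last \<gamma>) \<and> t \<in> L \<gamma>"
    if g: "\<gamma> \<in> AP" "0 < f \<gamma>" and Wn: "W q (lerase \<gamma>) t \<noteq> 0" for \<gamma> t
  proof -
    note lpg = lp[OF g(1)]
    have s1: "t \<noteq> [] \<and> hd t = hd \<gamma> \<and> last t = last \<gamma> \<and> t \<in> L \<gamma>"
      using W_supp[OF Wn] lpg unfolding L_def by simp
    have qpos: "0 < P v x \<and> 0 < P x w" if "q v w x \<noteq> 0" for v w x
    proof -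
      have "min (P v x) (reversal P mu w x) \<noteq> 0" "s v w \<noteq> 0" using that unfolding q_def by (auto split: if_splits)
      then have "0 < P v x" "0 < reversal P mu w x" using Pnn[of v x] Rnn[of w x]
        by (metis min.absorb1 min.absorb2 nle_le order_le_imp_less_or_eq)+
      then show ?thesis using mupos[of x] mupos[of w] Pnn[of x w]
        by (auto simp: reversal_def zero_less_divide_iff zero_less_mult_iff)
    qed
    have s2: "\<forall>e\<in>set (edges t). 0 < P (fst e) (snd e)"
    proof
      fix e assume "e \<in> set (edges t)"
      from W_edges[OF Wn this] obtain v w where
        "(v, w) \<in> set (edges (lerase \<gamma>))"
        "(fst e = v \<and> q v w (snd e) \<noteq> 0) \<or> (snd e = w \<and> q v w (fst e) \<noteq> 0)" by blast
      then show "0 < P (fst e) (snd e)" using qpos by blast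
    qed
    have s3: "\<forall>e. count_list (edges t) e \<le> 2"
    proof
      fix e :: "'a \<times> 'a"
      have d: "distinct (lerase \<gamma>)" using lpg by blast
      have "count_list (butlast (lerase \<gamma>)) (fst e) \<le> 1"
        using d by (intro distinct_count_le1) (simp add: distinct_butlast)
      moreover have "count_list (tl (lerase \<gamma>)) (snd e) \<le> 1"
        using d by (intro distinct_count_le1) (simp add: distinct_tl)
      ultimately show "count_list (edges t) e \<le> 2" using W_count[OF Wn, of e] by linarith
    qed
    show ?thesis using s1 s2 s3 unfolding paths_def by auto
  qed
  have suppAP: "t \<in> AP" if "\<gamma> \<in> AP" "0 < f \<gamma>" "W q (lerase \<gamma>) t \<noteq> 0" for \<gamma> t
    using supp[OF that] pathsAP APpaths[OF that(1)] by blast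
  have Wnn: "\<And>h t. 0 \<le> W q h t" using W_nonneg qnn by blast
  have Wle1: "W q (lerase \<gamma>) t \<le> 1" if "\<gamma> \<in> AP" "0 < f \<gamma>" for \<gamma> t
  proof (cases "W q (lerase \<gamma>) t = 0")
    case False
    then have "t \<in> L \<gamma>" using supp[OF that] by blast
    then have "W q (lerase \<gamma>) t \<le> (\<Sum>t\<in>L \<gamma>. W q (lerase \<gamma>) t)"
      by (intro member_le_sum finL Wnn)
    then show ?thesis using Wsum1[OF that] by simp
  qed simp
  define f' where "f' t = (\<Sum>\<gamma>\<in>AP. f \<gamma> * W q (lerase \<gamma>) t)" for t
  have f'nn: "0 \<le> f' t" for t
    unfolding f'_def using fl Wnn by (auto intro!: sum_nonneg)
  have finpaths: "finite (paths P x y)" if "0 < P' x y" for x y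
    using finite_subset[OF pathsAP[OF that] finAP] .
  have sumpaths: "(\<Sum>\<gamma>\<in>AP. if \<gamma> \<in> paths P x y then F \<gamma> else 0) = (\<Sum>\<gamma>\<in>paths P x y. F \<gamma>)"
    if "0 < P' x y" for x y and F :: "'a list \<Rightarrow> real"
  proof -
    have "(\<Sum>\<gamma>\<in>AP. if \<gamma> \<in> paths P x y then F \<gamma> else 0) = (\<Sum>\<gamma>\<in>{\<gamma>\<in>AP. \<gamma> \<in> paths P x y}. F \<gamma>)"
      by (rule sum.inter_filter[OF finAP, symmetric])
    also have "{\<gamma>\<in>AP. \<gamma> \<in> paths P x y} = paths P x y" using pathsAP[OF that] by blast
    finally show ?thesis .
  qed
  have termflow: "f \<gamma> * (\<Sum>t\<in>paths P x y. W q (lerase \<gamma>) t) = (if \<gamma> \<in> paths P x y then f \<gamma> else 0)"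
    if g: "\<gamma> \<in> AP" "0 < P' x y" for \<gamma> x y
  proof (cases "f \<gamma> = 0")
    case True then show ?thesis by simp
  next
    case False then have fp: "0 < f \<gamma>" using fl[OF g(1)] by simp
    show ?thesis
    proof (cases "\<gamma> \<in> paths P x y")
      case True
      have hx: "hd \<gamma> = x" "last \<gamma> = y" using inpaths[OF g(1)] True by auto
      have "(\<Sum>t\<in>paths P x y. W q (lerase \<gamma>) t) = (\<Sum>t\<in>L \<gamma>. W q (lerase \<gamma>) t)"
        by (rule sum_supp_eq[OF finpaths[OF g(2)] finL]) (use supp[OF g(1) fp] hx in auto)
      then show ?thesis using Wsum1[OF g(1) fp] True by simp
    next
      case False
      have "W q (lerase \<gamma>) t = 0" if "t \<in> paths P x y" for t
      proof (rule ccontr)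
        assume "W q (lerase \<gamma>) t \<noteq> 0"
        then have "t \<in> paths P (hd \<gamma>) (last \<gamma>)" using supp[OF g(1) fp] by blast
        then have "hd \<gamma> = x" "last \<gamma> = y" using that by (auto simp: paths_def)
        then show False using False inpaths[OF g(1)] by blast
      qed
      then show ?thesis using False by simp
    qed
  qed
  have flow: "is_flow P P' mu' f'"
    unfolding is_flow_def
  proof (intro conjI ballI allI impI)
    fix t assume tAP: "t \<in> allpaths P P'"
    show "0 \<le> f' t" by (rule f'nn)
    define x where "x = hd t"
    define y where "y = last t"
    have Pxy: "0 < P' x y" using APpaths tAP unfolding x_def y_def AP_def by blast
    have "f' t \<le> (\<Sum>\<gamma>\<in>AP. if \<gamma> \<in> paths P x y then f \<gamma> else 0)"
      unfolding f'_def
    proof (rule sum_mono)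
      fix \<gamma> assume gA: "\<gamma> \<in> AP"
      show "f \<gamma> * W q (lerase \<gamma>) t \<le> (if \<gamma> \<in> paths P x y then f \<gamma> else 0)"
      proof (cases "f \<gamma> = 0 \<or> W q (lerase \<gamma>) t = 0")
        case True then show ?thesis using fl[OF gA] by auto
      next
        case False
        then have fp: "0 < f \<gamma>" and Wn: "W q (lerase \<gamma>) t \<noteq> 0" using fl[OF gA] by auto
        have "t \<in> paths P (hd \<gamma>) (last \<gamma>)" using supp[OF gA fp Wn] by blast
        then have "hd \<gamma> = x" "last \<gamma> = y" unfolding x_def y_def by (auto simp: paths_def)
        then have "\<gamma> \<in> paths P x y" using inpaths[OF gA] by blast
        moreover have "f \<gamma> * W q (lerase \<gamma>) t \<le> f \<gamma>"
          using Wle1[OF gA fp, of t] fp by (simp add: mult_left_le)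
        ultimately show ?thesis by simp
      qed
    qed
    also have "\<dots> = mu' x * P' x y" using sumpaths[OF Pxy] fsum[OF Pxy] by simp
    also have "\<dots> \<le> 1" using mu'1 P'1 mu'nn P'nn by (simp add: mult_le_one)
    finally show "f' t \<le> 1" .
  next
    fix x y assume Pxy: "0 < P' x y"
    have "(\<Sum>t\<in>paths P x y. f' t) = (\<Sum>\<gamma>\<in>AP. f \<gamma> * (\<Sum>t\<in>paths P x y. W q (lerase \<gamma>) t))"
      unfolding f'_def by (subst sum.swap) (simp add: sum_distrib_left)
    also have "\<dots> = (\<Sum>\<gamma>\<in>AP. if \<gamma> \<in> paths P x y then f \<gamma> else 0)"
      using termflow Pxy by simp
    also have "\<dots> = mu' x * P' x y" using sumpaths[OF Pxy] fsum[OF Pxy] by simp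
    finally show "(\<Sum>t\<in>paths P x y. f' t) = mu' x * P' x y" .
  qed
  define B where "B = congB P mu P' f"
  have Bst: "congB_state P mu P' f z \<le> B" for z
    unfolding B_def congB_def by (rule Max_ge) auto
  have Ssum_nn: "0 \<le> (\<Sum>\<gamma>\<in>{\<gamma>\<in>AP. z \<in> set \<gamma>}. real (plen \<gamma>) * f \<gamma>)" for z
    using fl by (auto intro!: sum_nonneg)
  have Bsum: "(\<Sum>\<gamma>\<in>{\<gamma>\<in>AP. z \<in> set \<gamma>}. real (plen \<gamma>) * f \<gamma>) \<le> mu z * B" for z
  proof -
    have "(1 / mu z) * (\<Sum>\<gamma>\<in>{\<gamma>\<in>AP. z \<in> set \<gamma>}. real (plen \<gamma>) * f \<gamma>) \<le> B"
      using Bst[of z] unfolding congB_state_def AP_def .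
    then show ?thesis using mupos[of z] by (simp add: divide_le_eq mult.commute)
  qed
  have Bnn: "0 \<le> B"
  proof -
    obtain z :: 'a where True by simp
    have "0 \<le> (1 / mu z) * (\<Sum>\<gamma>\<in>{\<gamma>\<in>AP. z \<in> set \<gamma>}. real (plen \<gamma>) * f \<gamma>)"
      using Ssum_nn[of z] mupos[of z] by simp
    then show ?thesis using Bst[of z] unfolding congB_state_def AP_def by linarith
  qed
  have edgebound: "congA_edge P mu P' f' a b \<le> 4 * k * B" if Pab: "0 < P a b" for a b
  proof -
    define c where "c t = real (count_list (edges t) (a, b))" for t
    define Ia where "Ia \<gamma> = (if a \<in> set \<gamma> then 1 else 0::real)" for \<gamma>
    define Ib where "Ib \<gamma> = (if b \<in> set \<gamma> then 1 else 0::real)" for \<gamma>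
    define R where "R = reversal P mu b a"
    have Rnn': "0 \<le> R" unfolding R_def by (rule Rnn)
    have S1: "(\<Sum>t\<in>{t\<in>allpaths P P'. (a, b) \<in> set (edges t)}. real (count_list (edges t) (a, b)) * real (plen t) * f' t)
        = (\<Sum>t\<in>AP. c t * real (plen t) * f' t)"
      unfolding AP_def c_def by (rule sum.mono_neutral_left) (auto simp: finite_allpaths)
    have S2: "(\<Sum>t\<in>AP. c t * real (plen t) * f' t) = (\<Sum>\<gamma>\<in>AP. f \<gamma> * (\<Sum>t\<in>AP. W q (lerase \<gamma>) t * c t * real (plen t)))"
    proof -
      have "(\<Sum>t\<in>AP. c t * real (plen t) * f' t) = (\<Sum>t\<in>AP. \<Sum>\<gamma>\<in>AP. f \<gamma> * (W q (lerase \<gamma>) t * c t * real (plen t)))"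
        unfolding f'_def by (simp add: sum_distrib_left mult_ac)
      also have "\<dots> = (\<Sum>\<gamma>\<in>AP. \<Sum>t\<in>AP. f \<gamma> * (W q (lerase \<gamma>) t * c t * real (plen t)))"
        by (rule sum.swap)
      also have "\<dots> = (\<Sum>\<gamma>\<in>AP. f \<gamma> * (\<Sum>t\<in>AP. W q (lerase \<gamma>) t * c t * real (plen t)))"
        by (simp add: sum_distrib_left)
      finally show ?thesis .
    qed
    have S3: "f \<gamma> * (\<Sum>t\<in>AP. W q (lerase \<gamma>) t * c t * real (plen t))
        \<le> f \<gamma> * (2 * real (plen \<gamma>) * (k * P a b * Ia \<gamma> + k * R * Ib \<gamma>))" if gA: "\<gamma> \<in> AP" for \<gamma>
    proof (cases "f \<gamma> = 0")
      case False
      then have fp: "0 < f \<gamma>" using fl[OF gA] by simp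
      define h where "h = lerase \<gamma>"
      note lpg = lp[OF gA, folded h_def]
      have e1: "(\<Sum>t\<in>AP. W q h t * c t * real (plen t)) = (\<Sum>t\<in>L \<gamma>. W q h t * c t * real (plen t))"
        by (rule sum_supp_eq[OF finAP finL]) (use supp[OF gA fp] suppAP[OF gA fp] in \<open>auto simp: h_def\<close>)
      have e2: "(\<Sum>t\<in>L \<gamma>. W q h t * c t * real (plen t)) = 2 * real (length h - 1) * (\<Sum>t\<in>L \<gamma>. W q h t * c t)"
      proof -
        have "real (plen t) = 2 * real (length h - 1)" if "t \<in> L \<gamma>" for t
          using that lpg unfolding L_def plen_def h_def by (cases "lerase \<gamma>") auto
        then have "(\<Sum>t\<in>L \<gamma>. W q h t * c t * real (plen t)) = (\<Sum>t\<in>L \<gamma>. 2 * real (length h - 1) * (W q h t * c t))"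
          by (intro sum.cong refl) simp
        then show ?thesis by (simp add: sum_distrib_left)
      qed
      have e3: "(\<Sum>t\<in>L \<gamma>. W q h t * c t) \<le> (if a \<in> set (butlast h) then k * P a b else 0) + (if b \<in> set (tl h) then k * reversal P mu b a else 0)"
        unfolding L_def c_def h_def
        by (rule W_exp[OF qnn, where h="lerase \<gamma>" and \<alpha>="\<lambda>v x. k * P v x" and \<beta>="\<lambda>w x. k * reversal P mu w x" and a=a and b=b])
           (use lpg good[OF gA fp] in \<open>auto simp: h_def\<close>)
      have sb: "set (butlast h) \<subseteq> set \<gamma>" "set (tl h) \<subseteq> set \<gamma>" using lpg
        by (auto dest: in_set_butlastD) (metis list.set_sel(2) subsetD tl_Nil empty_iff list.set(1))
      have kP: "0 \<le> k * P a b" "0 \<le> k * R" using k0' Pnn Rnn' by auto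
      have e4: "(if a \<in> set (butlast h) then k * P a b else 0) + (if b \<in> set (tl h) then k * reversal P mu b a else 0)
          \<le> k * P a b * Ia \<gamma> + k * R * Ib \<gamma>"
        using sb kP unfolding Ia_def Ib_def R_def by auto
      have "length h \<le> length \<gamma>" using lpg by blast
      then have e5: "real (length h - 1) \<le> real (plen \<gamma>)" unfolding plen_def by simp
      have Xnn: "0 \<le> (\<Sum>t\<in>L \<gamma>. W q h t * c t)" using Wnn unfolding c_def by (auto intro!: sum_nonneg)
      have "2 * real (length h - 1) * (\<Sum>t\<in>L \<gamma>. W q h t * c t) \<le> 2 * real (plen \<gamma>) * (k * P a b * Ia \<gamma> + k * R * Ib \<gamma>)"
        using e3 e4 e5 Xnn by (intro mult_mono) auto
      then show ?thesis using e1 e2 fp unfolding h_def by (simp add: mult_left_mono)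
    qed simp
    have S4: "(\<Sum>\<gamma>\<in>AP. f \<gamma> * (2 * real (plen \<gamma>) * (k * P a b * Ia \<gamma> + k * R * Ib \<gamma>)))
       = 2 * k * P a b * (\<Sum>\<gamma>\<in>{\<gamma>\<in>AP. a \<in> set \<gamma>}. real (plen \<gamma>) * f \<gamma>)
         + 2 * k * R * (\<Sum>\<gamma>\<in>{\<gamma>\<in>AP. b \<in> set \<gamma>}. real (plen \<gamma>) * f \<gamma>)"
    proof -
      have "(\<Sum>\<gamma>\<in>AP. f \<gamma> * (2 * real (plen \<gamma>) * (k * P a b * Ia \<gamma> + k * R * Ib \<gamma>)))
         = (\<Sum>\<gamma>\<in>AP. 2 * k * P a b * (if a \<in> set \<gamma> then real (plen \<gamma>) * f \<gamma> else 0)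
             + 2 * k * R * (if b \<in> set \<gamma> then real (plen \<gamma>) * f \<gamma> else 0))"
        by (intro sum.cong refl) (simp add: Ia_def Ib_def algebra_simps)
      also have "\<dots> = 2 * k * P a b * (\<Sum>\<gamma>\<in>AP. (if a \<in> set \<gamma> then real (plen \<gamma>) * f \<gamma> else 0))
             + 2 * k * R * (\<Sum>\<gamma>\<in>AP. (if b \<in> set \<gamma> then real (plen \<gamma>) * f \<gamma> else 0))"
        by (simp add: sum.distrib sum_distrib_left)
      finally show ?thesis by (simp add: sum.inter_filter[OF finAP])
    qed
    have RB: "2 * k * R * (\<Sum>\<gamma>\<in>{\<gamma>\<in>AP. b \<in> set \<gamma>}. real (plen \<gamma>) * f \<gamma>) \<le> 2 * k * R * (mu b * B)"
      using Bsum[of b] k0' Rnn' by (intro mult_left_mono) auto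
    have PB: "2 * k * P a b * (\<Sum>\<gamma>\<in>{\<gamma>\<in>AP. a \<in> set \<gamma>}. real (plen \<gamma>) * f \<gamma>) \<le> 2 * k * P a b * (mu a * B)"
      using Bsum[of a] k0' Pnn[of a b] by (intro mult_left_mono) auto
    have Rmu: "R * mu b = mu a * P a b" unfolding R_def reversal_def using mupos[of b] by simp
    have tot: "(\<Sum>t\<in>AP. c t * real (plen t) * f' t) \<le> 4 * k * B * (mu a * P a b)"
    proof -
      have "(\<Sum>t\<in>AP. c t * real (plen t) * f' t) \<le> (\<Sum>\<gamma>\<in>AP. f \<gamma> * (2 * real (plen \<gamma>) * (k * P a b * Ia \<gamma> + k * R * Ib \<gamma>)))"
        unfolding S2 by (rule sum_mono) (rule S3)
      also have "\<dots> \<le> 2 * k * P a b * (mu a * B) + 2 * k * R * (mu b * B)"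
        unfolding S4 using RB PB by linarith
      also have "2 * k * P a b * (mu a * B) + 2 * k * R * (mu b * B) = 4 * k * B * (mu a * P a b)"
      proof -
        have "2 * k * R * (mu b * B) = 2 * k * B * (R * mu b)" by (simp add: mult_ac)
        then have eq: "2 * k * R * (mu b * B) = 2 * k * B * (mu a * P a b)" using Rmu by simp
        show ?thesis unfolding eq by (simp add: algebra_simps)
      qed
      finally show ?thesis .
    qed
    have pos: "0 < mu a * P a b" using mupos[of a] Pab by simp
    show ?thesis
      unfolding congA_edge_def S1[unfolded AP_def c_def] using tot pos unfolding AP_def c_def
      by (simp add: divide_le_eq mult.commute)
  qed
  have ne: "{(z, w). 0 < P z w} \<noteq> {}"
  proof -
    obtain z :: 'a where True by simp
    have "sum (P z) UNIV = 1" using stP by (simp add: stochastic_def)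
    then obtain w where "P z w \<noteq> 0" by (metis (mono_tags) sum.neutral zero_neq_one)
    then have "0 < P z w" using Pnn[of z w] by simp
    then show ?thesis by auto
  qed
  have cA: "congA P mu P' f' \<le> 4 * k * B"
    unfolding congA_def using ne edgebound by (subst Max_le_iff) auto
  have "4 * k * B \<le> 8 * k * B" using k0' Bnn by (simp add: mult_nonneg_nonneg)
  then have "congA P mu P' f' \<le> 8 * k * B" using cA by linarith
  then have "ereal (congA P mu P' f') \<le> 8 * \<kappa> * ereal B"
    using kE by simp
  then show ?thesis using flow unfolding \<kappa>_def B_def by blast
qed

end
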